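(* Let $L\ge 3$, $W=(\mathbb{Z}/2\mathbb{Z})^{*L}$, $q\in[\frac{1}{L-1},1]$, $l\in\mathbb{N}$ with $l\ge 2$, and let $\beta,\beta'\in\mathbb{C}_q^1[W]\ominus S_1$, $\gamma\in\mathbb{C}_q^l[W]\ominus S_l$, $\gamma'\in\mathbb{C}_q^l[W]$. Then for all $m,n,m',n'\in\mathbb{N}_0$, $$\langle\beta_{m,n},\beta'_{m',n'}\rangle=\delta_{m+n,m'+n'}(L-1)^{m+n-|n-n'|}(-1)^{|n-n'|}\langle\beta,\beta'\rangle,$$ $$\langle\gamma_{m,n},\gamma'_{m',n'}\rangle=\delta_{m,m'}\delta_{n,n'}(L-1)^{m+n}\langle\gamma,\gamma'\rangle,$$ where $\langle\cdot,\cdot\rangle$ is the inner product of $\ell^2(W)$.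
   Context: $W=(\mathbb{Z}/2\mathbb{Z})^{*L}$ is the free product of $L$ copies of $\mathbb{Z}/2\mathbb{Z}$ with canonical generating set $S$ and word length $|\cdot|$. Put $p=\frac{q-1}{q^2}$. $\mathbb{C}_q[W]$ is the $*$-algebra with linear basis $\{T_w\}_{w\in W}$, $T_e=1$, $T_w^*=T_{w^{-1}}$, and $T_sT_w=T_{sw}$ if $|sw|>|w|$, $T_sT_w=T_{sw}+pT_w$ if $|sw|<|w|$ ($s\in S,w\in W$). Elements of $\mathbb{C}_q[W]$ are identified with vectors in $\ell^2(W)$ via $T_w\mapsto\delta_w$. $h_0=1$, $h_m=\sum_{|w|=m}T_w$. For $l\in\mathbb{N}_0$, $q_l$ is the projection onto $\mathrm{span}\{T_w:|w|=l\}$ and $\mathbb{C}_q^l[W]=q_l(\mathbb{C}_q[W])$. $S_l=\mathrm{span}\{q_l(h_1x),q_l(xh_1): x\in\mathbb{C}_q^{l-1}[W]\}$ and $\mathbb{C}_q^l[W]\ominus S_l$ is the orthogonal complement of $S_l$ in $\mathbb{C}_q^l[W]$ in $\ell^2(W)$. For $\gamma\in\mathbb{C}_q^l[W]$ and $m,n\in\mathbb{N}_0$, $\gamma_{m,n}=q_{m+n+l}(h_m\gamma h_n)$. *)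

theory Defs
  imports Complex_Main
begin

text \<open>Elements of W = free product of L copies of Z/2Z are represented by reduced
words: lists over the generators 0..L-1 with no two consecutive letters equal.  Elements of C_q[W] (and of l^2(W)) are functions
nat list => complex; C_q[W] consists of the finitely supported ones supported on
reduced words, T_w being the indicator of w.\<close>

definition reduced :: "nat \<Rightarrow> nat list \<Rightarrow> bool" where
  "reduced L w \<longleftrightarrow> set w \<subseteq> {..<L} \<and> successively (\<noteq>) w"

definition hecke :: "nat \<Rightarrow> (nat list \<Rightarrow> complex) \<Rightarrow> bool" where
  "hecke L x \<longleftrightarrow> finite {w. x w \<noteq> 0} \<and> (\<forall>w. x w \<noteq> 0 \<longrightarrow> reduced L w)"

definition hp :: "real \<Rightarrow> real" where
  "hp q = (q - 1) / q\<^sup>2"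

text \<open>Left multiplication by T_s:  T_s T_w = T_{sw} if |sw| > |w|,
  T_s T_w = T_{sw} + p T_w if |sw| < |w|, extended linearly.\<close>
definition Tgen :: "nat \<Rightarrow> real \<Rightarrow> nat \<Rightarrow> (nat list \<Rightarrow> complex) \<Rightarrow> (nat list \<Rightarrow> complex)" where
  "Tgen L q s x = (\<lambda>u. if \<not> reduced L u then 0
       else if u \<noteq> [] \<and> hd u = s then x (tl u) + complex_of_real (hp q) * x u
       else x (s # u))"

definition Tword :: "nat \<Rightarrow> real \<Rightarrow> nat list \<Rightarrow> (nat list \<Rightarrow> complex) \<Rightarrow> (nat list \<Rightarrow> complex)" where
  "Tword L q v x = foldr (Tgen L q) v x"

definition hmult :: "nat \<Rightarrow> real \<Rightarrow> (nat list \<Rightarrow> complex) \<Rightarrow> (nat list \<Rightarrow> complex) \<Rightarrow> (nat list \<Rightarrow> complex)" where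
  "hmult L q x y = (\<lambda>u. \<Sum>v\<in>{v. x v \<noteq> 0}. x v * Tword L q v y u)"

definition linner :: "(nat list \<Rightarrow> complex) \<Rightarrow> (nat list \<Rightarrow> complex) \<Rightarrow> complex" where
  "linner x y = (\<Sum>w\<in>{w. x w \<noteq> 0}. x w * cnj (y w))"

definition hsum :: "nat \<Rightarrow> nat \<Rightarrow> (nat list \<Rightarrow> complex)" where
  "hsum L m = (\<lambda>w. if reduced L w \<and> length w = m then 1 else 0)"

definition qproj :: "nat \<Rightarrow> (nat list \<Rightarrow> complex) \<Rightarrow> (nat list \<Rightarrow> complex)" where
  "qproj l x = (\<lambda>w. if length w = l then x w else 0)"

definition Cl :: "nat \<Rightarrow> nat \<Rightarrow> (nat list \<Rightarrow> complex) set" where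
  "Cl L l = {x. hecke L x \<and> (\<forall>w. length w \<noteq> l \<longrightarrow> x w = 0)}"

definition cspan :: "(nat list \<Rightarrow> complex) set \<Rightarrow> (nat list \<Rightarrow> complex) set" where
  "cspan A = {x. \<exists>F c. finite F \<and> F \<subseteq> A \<and> x = (\<lambda>w. \<Sum>a\<in>F. c a * a w)}"

definition Sl :: "nat \<Rightarrow> real \<Rightarrow> nat \<Rightarrow> (nat list \<Rightarrow> complex) set" where
  "Sl L q l = cspan ({qproj l (hmult L q (hsum L 1) x) | x. x \<in> Cl L (l - 1)}
                   \<union> {qproj l (hmult L q x (hsum L 1)) | x. x \<in> Cl L (l - 1)})"

definition Cperp :: "nat \<Rightarrow> real \<Rightarrow> nat \<Rightarrow> (nat list \<Rightarrow> complex) set" where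
  "Cperp L q l = {x. x \<in> Cl L l \<and> (\<forall>y\<in>Sl L q l. linner x y = 0)}"

definition gmn :: "nat \<Rightarrow> real \<Rightarrow> nat \<Rightarrow> (nat list \<Rightarrow> complex) \<Rightarrow> nat \<Rightarrow> nat \<Rightarrow> (nat list \<Rightarrow> complex)" where
  "gmn L q l g m n = qproj (m + n + l) (hmult L q (hmult L q (hsum L m) g) (hsum L n))"

end

theory Submission
  imports Defs
begin

definition RW :: "nat \<Rightarrow> nat \<Rightarrow> nat list set" where
  "RW L N = {u. reduced L u \<and> length u = N}"

definition extL :: "nat \<Rightarrow> nat list \<Rightarrow> nat set" where
  "extL L u = {a. a < L \<and> (u \<noteq> [] \<longrightarrow> a \<noteq> hd u)}"

definition extR :: "nat \<Rightarrow> nat list \<Rightarrow> nat set" where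
  "extR L u = {a. a < L \<and> (u \<noteq> [] \<longrightarrow> a \<noteq> last u)}"

lemma reduced_Nil[simp]: "reduced L []"
  by (simp add: reduced_def)

lemma reduced_Cons: "reduced L (a#u) \<longleftrightarrow> a < L \<and> reduced L u \<and> (u \<noteq> [] \<longrightarrow> a \<noteq> hd u)"
  by (auto simp: reduced_def successively_Cons)

lemma reduced_append: "reduced L (u @ v) \<longleftrightarrow> reduced L u \<and> reduced L v \<and> (u = [] \<or> v = [] \<or> last u \<noteq> hd v)"
  by (auto simp: reduced_def successively_append_iff)

lemma reduced_snoc: "reduced L (u @ [b]) \<longleftrightarrow> b < L \<and> reduced L u \<and> (u \<noteq> [] \<longrightarrow> b \<noteq> last u)"
  by (auto simp: reduced_append reduced_Cons)

lemma reduced_take: "reduced L u \<Longrightarrow> reduced L (take k u)"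
  by (metis append_take_drop_id reduced_append)

lemma reduced_drop: "reduced L u \<Longrightarrow> reduced L (drop k u)"
  by (metis append_take_drop_id reduced_append)

lemma finite_RW: "finite (RW L N)"
proof -
  have "RW L N \<subseteq> {xs. set xs \<subseteq> {..<L} \<and> length xs = N}"
    by (auto simp: RW_def reduced_def)
  moreover have "finite {xs. set xs \<subseteq> {..<L} \<and> length xs = N}"
    by (rule finite_lists_length_eq) simp
  ultimately show ?thesis by (rule finite_subset)
qed

lemma finite_extL: "finite (extL L u)" by (auto simp: extL_def)
lemma finite_extR: "finite (extR L u)" by (auto simp: extR_def)

lemma RW_Suc_left:
  "(\<Sum>u\<in>RW L (Suc N). F u) = (\<Sum>u\<in>RW L N. \<Sum>a\<in>extL L u. F (a # u))"
proof -
  have "(\<Sum>u\<in>RW L N. \<Sum>a\<in>extL L u. F (a # u)) = (\<Sum>p\<in>Sigma (RW L N) (extL L). F (snd p # fst p))"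
    by (subst sum.Sigma) (auto simp: finite_RW finite_extL split_beta)
  also have "\<dots> = (\<Sum>u\<in>RW L (Suc N). F u)"
    by (rule sum.reindex_bij_witness[of _ "\<lambda>w. (tl w, hd w)" "\<lambda>p. snd p # fst p"])
       (auto simp: RW_def extL_def reduced_Cons length_Suc_conv)
  finally show ?thesis by simp
qed

lemma RW_Suc_right:
  "(\<Sum>u\<in>RW L (Suc N). F u) = (\<Sum>u\<in>RW L N. \<Sum>a\<in>extR L u. F (u @ [a]))"
proof -
  have "(\<Sum>u\<in>RW L N. \<Sum>a\<in>extR L u. F (u @ [a])) = (\<Sum>p\<in>Sigma (RW L N) (extR L). F (fst p @ [snd p]))"
    by (subst sum.Sigma) (auto simp: finite_RW finite_extR split_beta)
  also have "\<dots> = (\<Sum>u\<in>RW L (Suc N). F u)"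
  proof (rule sum.reindex_bij_witness[of _ "\<lambda>w. (butlast w, last w)" "\<lambda>p. fst p @ [snd p]"])
    fix b assume "b \<in> RW L (Suc N)"
    then have "b \<noteq> []" by (auto simp: RW_def)
    then have e: "b = butlast b @ [last b]" by simp
    show "fst (butlast b, last b) @ [snd (butlast b, last b)] = b" using e by simp
    show "(butlast b, last b) \<in> Sigma (RW L N) (extR L)"
      using \<open>b \<in> RW L (Suc N)\<close> e reduced_snoc[of L "butlast b" "last b"]
      by (auto simp: RW_def extR_def)
  qed (auto simp: RW_def extR_def reduced_snoc)
  finally show ?thesis by simp
qed

lemma card_extL: "u \<noteq> [] \<Longrightarrow> hd u < L \<Longrightarrow> card (extL L u) = L - 1"
proof -
  assume "u \<noteq> []" "hd u < L"
  then have "extL L u = {..<L} - {hd u}" by (auto simp: extL_def)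
  then show ?thesis using \<open>hd u < L\<close> by simp
qed

lemma card_extR: "u \<noteq> [] \<Longrightarrow> last u < L \<Longrightarrow> card (extR L u) = L - 1"
proof -
  assume "u \<noteq> []" "last u < L"
  then have "extR L u = {..<L} - {last u}" by (auto simp: extR_def)
  then show ?thesis using \<open>last u < L\<close> by simp
qed

lemma RW_hd: "u \<in> RW L N \<Longrightarrow> N \<ge> 1 \<Longrightarrow> u \<noteq> [] \<and> hd u < L \<and> last u < L"
proof -
  assume a: "u \<in> RW L N" "N \<ge> 1"
  then have "u \<noteq> []" "set u \<subseteq> {..<L}" by (auto simp: RW_def reduced_def)
  then show ?thesis using hd_in_set last_in_set by blast
qed

lemma Tword_Cons: "Tword L q (s # v) z = Tgen L q s (Tword L q v z)"
  by (simp add: Tword_def)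

lemma Tword_top:
  assumes "\<And>w. length w > c \<Longrightarrow> z w = 0" and zr: "\<And>w. \<not> reduced L w \<Longrightarrow> z w = 0"
  shows "(\<forall>u. length u > c + length v \<longrightarrow> Tword L q v z u = 0) \<and>
         (\<forall>u. length u = c + length v \<longrightarrow> Tword L q v z u =
            (if reduced L u \<and> take (length v) u = v then z (drop (length v) u) else 0))"
proof (induction v)
  case Nil
  have "Tword L q [] z = z" by (simp add: Tword_def)
  then show ?case using assms(1) zr by auto
next
  case (Cons s v)
  let ?Z = "Tword L q v z"
  have Z1: "\<And>u. length u > c + length v \<Longrightarrow> ?Z u = 0" using Cons.IH by blast
  have Z2: "\<And>u. length u = c + length v \<Longrightarrow> ?Z u =
            (if reduced L u \<and> take (length v) u = v then z (drop (length v) u) else 0)"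
    using Cons.IH by blast
  show ?case
  proof (intro conjI allI impI)
    fix u :: "nat list" assume u: "length u > c + length (s # v)"
    have "?Z (tl u) = 0" "?Z u = 0" "?Z (s # u) = 0" using u by (simp_all add: Z1)
    then show "Tword L q (s # v) z u = 0"
      by (simp add: Tword_Cons Tgen_def)
  next
    fix u :: "nat list" assume u: "length u = c + length (s # v)"
    then have ne: "u \<noteq> []" by auto
    then obtain a r where ar: "u = a # r" by (cases u) auto
    have z0: "?Z u = 0" "?Z (s # u) = 0" using u by (simp_all add: Z1)
    have "Tword L q (s # v) z u = (if \<not> reduced L u then 0 else if a = s then ?Z r else 0)"
      using z0 ar by (cases "a = s") (simp_all add: Tword_Cons Tgen_def)
    also have "\<dots> = (if reduced L u \<and> take (length (s # v)) u = s # v then z (drop (length (s # v)) u) else 0)"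
    proof -
      have lr: "length r = c + length v" using u ar by simp
      show ?thesis using Z2[OF lr] ar by (auto simp: reduced_Cons)
    qed
    finally show "Tword L q (s # v) z u = (if reduced L u \<and> take (length (s # v)) u = s # v then z (drop (length (s # v)) u) else 0)" .
  qed
qed

lemma Tgen_supp: "{u. Tgen L q s z u \<noteq> 0} \<subseteq> Cons s ` {w. z w \<noteq> 0} \<union> {w. z w \<noteq> 0} \<union> tl ` {w. z w \<noteq> 0}"
proof
  fix u assume "u \<in> {u. Tgen L q s z u \<noteq> 0}"
  then have h: "Tgen L q s z u \<noteq> 0" by simp
  show "u \<in> Cons s ` {w. z w \<noteq> 0} \<union> {w. z w \<noteq> 0} \<union> tl ` {w. z w \<noteq> 0}"
  proof (cases "u \<noteq> [] \<and> hd u = s")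
    case True
    then have e: "u = s # tl u" by auto
    have "z (tl u) \<noteq> 0 \<or> z u \<noteq> 0" using h True by (auto simp: Tgen_def split: if_splits)
    then show ?thesis
    proof
      assume "z (tl u) \<noteq> 0"
      then have "s # tl u \<in> Cons s ` {w. z w \<noteq> 0}" by blast
      then show ?thesis using e by simp
    qed simp
  next
    case False
    then have "z (s # u) \<noteq> 0" using h by (auto simp: Tgen_def split: if_splits)
    then have "tl (s # u) \<in> tl ` {w. z w \<noteq> 0}" by blast
    then show ?thesis by simp
  qed
qed

lemma Tword_finite: "finite {w. z w \<noteq> 0} \<Longrightarrow> finite {w. Tword L q v z w \<noteq> 0}"
proof (induction v)
  case Nil then show ?case by (simp add: Tword_def)
next
  case (Cons s v)
  then have f: "finite {w. Tword L q v z w \<noteq> 0}" by simp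
  show ?case unfolding Tword_Cons
    by (rule finite_subset[OF Tgen_supp]) (simp add: f)
qed

lemma hmult_finite:
  assumes "finite {w. x w \<noteq> 0}" "finite {w. y w \<noteq> 0}"
  shows "finite {w. hmult L q x y w \<noteq> 0}"
proof -
  have "{w. hmult L q x y w \<noteq> 0} \<subseteq> (\<Union>v\<in>{w. x w \<noteq> 0}. {w. Tword L q v y w \<noteq> 0})"
  proof
    fix w assume "w \<in> {w. hmult L q x y w \<noteq> 0}"
    then have "(\<Sum>v\<in>{v. x v \<noteq> 0}. x v * Tword L q v y w) \<noteq> 0" by (simp add: hmult_def)
    then obtain v where "x v \<noteq> 0" "x v * Tword L q v y w \<noteq> 0"
      using sum.not_neutral_contains_not_neutral by force
    then show "w \<in> (\<Union>v\<in>{w. x w \<noteq> 0}. {w. Tword L q v y w \<noteq> 0})" by auto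
  qed
  moreover have "finite (\<Union>v\<in>{w. x w \<noteq> 0}. {w. Tword L q v y w \<noteq> 0})"
    using assms(1) Tword_finite[OF assms(2)] by (rule finite_UN_I)
  ultimately show ?thesis by (rule finite_subset)
qed

lemma hmult_top:
  assumes fx: "finite {w. x w \<noteq> 0}"
    and xa: "\<And>w. length w > a \<Longrightarrow> x w = 0"
    and yb: "\<And>w. length w > b \<Longrightarrow> y w = 0"
    and yr: "\<And>w. \<not> reduced L w \<Longrightarrow> y w = 0"
  shows "(\<forall>u. length u > a + b \<longrightarrow> hmult L q x y u = 0) \<and>
         (\<forall>u. length u = a + b \<longrightarrow> hmult L q x y u =
              (if reduced L u then x (take a u) * y (drop a u) else 0))"
proof (intro conjI allI impI)
  fix u :: "nat list" assume u: "length u > a + b"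
  have zz: "\<And>v. v \<in> {v. x v \<noteq> 0} \<Longrightarrow> x v * Tword L q v y u = 0"
  proof -
    fix v assume "v \<in> {v. x v \<noteq> 0}"
    then have "length v \<le> a" using xa by (meson linorder_not_le mem_Collect_eq)
    then have "length u > b + length v" using u by simp
    then have "Tword L q v y u = 0"
      using Tword_top[where c=b and z=y and L=L and q=q and v=v, OF yb yr] by blast
    then show "x v * Tword L q v y u = 0" by simp
  qed
  show "hmult L q x y u = 0" unfolding hmult_def by (rule sum.neutral) (use zz in blast)
next
  fix u :: "nat list" assume u: "length u = a + b"
  define R where "R = (if reduced L u then x (take a u) * y (drop a u) else 0)"
  have "hmult L q x y u = (\<Sum>v\<in>{v. x v \<noteq> 0}. if v = take a u then R else 0)"
    unfolding hmult_def
  proof (rule sum.cong)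
    fix v assume "v \<in> {v. x v \<noteq> 0}"
    then have lv: "length v \<le> a" using xa by (meson linorder_not_le mem_Collect_eq)
    have T: "(\<forall>u. length u > b + length v \<longrightarrow> Tword L q v y u = 0) \<and>
         (\<forall>u. length u = b + length v \<longrightarrow> Tword L q v y u =
            (if reduced L u \<and> take (length v) u = v then y (drop (length v) u) else 0))"
      by (rule Tword_top[OF yb yr])
    show "x v * Tword L q v y u = (if v = take a u then R else 0)"
    proof (cases "length v = a")
      case True
      then have "length u = b + length v" using u by simp
      then have "Tword L q v y u = (if reduced L u \<and> take a u = v then y (drop a u) else 0)"
        using T True by simp
      then show ?thesis unfolding R_def by auto
    next
      case False
      then have "length v < a" using lv by simp
      then have "v \<noteq> take a u" using u by auto
      moreover have "Tword L q v y u = 0" using T \<open>length v < a\<close> u by simp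
      ultimately show ?thesis by simp
    qed
  qed simp
  also have "\<dots> = R"
    using fx by (simp add: sum.delta R_def)
  finally show "hmult L q x y u = (if reduced L u then x (take a u) * y (drop a u) else 0)"
    unfolding R_def .
qed

lemma hsum_supp: "{w. hsum L m w \<noteq> 0} = RW L m"
  by (auto simp: hsum_def RW_def)

lemma hsum_finite: "finite {w. hsum L m w \<noteq> 0}"
  by (simp add: hsum_supp finite_RW)

lemma hsum_above: "length w > m \<Longrightarrow> hsum L m w = 0"
  by (simp add: hsum_def)

lemma hsum_red: "\<not> reduced L w \<Longrightarrow> hsum L m w = 0"
  by (simp add: hsum_def)

lemma Cl_finite: "g \<in> Cl L l \<Longrightarrow> finite {w. g w \<noteq> 0}"
  by (simp add: Cl_def hecke_def)

lemma Cl_red: "g \<in> Cl L l \<Longrightarrow> \<not> reduced L w \<Longrightarrow> g w = 0"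
  unfolding Cl_def hecke_def by blast

lemma Cl_len: "g \<in> Cl L l \<Longrightarrow> length w \<noteq> l \<Longrightarrow> g w = 0"
  unfolding Cl_def by blast

lemma gmn_eq:
  assumes g: "g \<in> Cl L l"
  shows "gmn L q l g m n = (\<lambda>u. if length u = m + n + l \<and> reduced L u then g (take l (drop m u)) else 0)"
proof
  fix u :: "nat list"
  define x1 where "x1 = hmult L q (hsum L m) g"
  have gl: "\<And>w. length w > l \<Longrightarrow> g w = 0" using Cl_len[OF g] by simp
  have H1: "(\<forall>u. length u > m + l \<longrightarrow> x1 u = 0) \<and>
         (\<forall>u. length u = m + l \<longrightarrow> x1 u =
              (if reduced L u then hsum L m (take m u) * g (drop m u) else 0))"
    unfolding x1_def
    by (rule hmult_top[OF hsum_finite hsum_above gl Cl_red[OF g]])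
  have fx1: "finite {w. x1 w \<noteq> 0}" unfolding x1_def
    by (rule hmult_finite[OF hsum_finite Cl_finite[OF g]])
  have x1a: "\<And>w. length w > m + l \<Longrightarrow> x1 w = 0" using H1 by blast
  have H2: "(\<forall>u. length u > (m + l) + n \<longrightarrow> hmult L q x1 (hsum L n) u = 0) \<and>
         (\<forall>u. length u = (m + l) + n \<longrightarrow> hmult L q x1 (hsum L n) u =
              (if reduced L u then x1 (take (m + l) u) * hsum L n (drop (m + l) u) else 0))"
    by (rule hmult_top[OF fx1 x1a hsum_above hsum_red])
  show "gmn L q l g m n u = (if length u = m + n + l \<and> reduced L u then g (take l (drop m u)) else 0)"
  proof (cases "length u = m + n + l \<and> reduced L u")
    case True
    then have lu: "length u = (m + l) + n" and ru: "reduced L u" by auto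
    have e1: "gmn L q l g m n u = x1 (take (m + l) u) * hsum L n (drop (m + l) u)"
      unfolding gmn_def qproj_def x1_def[symmetric] using H2 lu ru True by simp
    have lt: "length (take (m + l) u) = m + l" using lu by simp
    have rt: "reduced L (take (m + l) u)" using reduced_take[OF ru] .
    have e2: "x1 (take (m + l) u) = hsum L m (take m u) * g (take l (drop m u))"
      using H1 lt rt by (simp add: drop_take min_def)
    have h1: "hsum L m (take m u) = 1" using lu reduced_take[OF ru, of m] by (simp add: hsum_def)
    have h2: "hsum L n (drop (m + l) u) = 1" using lu reduced_drop[OF ru, of "m+l"] by (simp add: hsum_def)
    show ?thesis using True e1 e2 h1 h2 by simp
  next
    case False
    show ?thesis
    proof (cases "length u = m + n + l")
      case True
      then have "\<not> reduced L u" using False by simp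
      then show ?thesis unfolding gmn_def qproj_def x1_def[symmetric] using H2 True by simp
    next
      case False
      then show ?thesis unfolding gmn_def qproj_def by simp
    qed
  qed
qed

lemma Sl_left_eq:
  assumes x: "x \<in> Cl L (l - 1)" and l: "l \<ge> 1"
  shows "qproj l (hmult L q (hsum L 1) x) = (\<lambda>u. if length u = l \<and> reduced L u then x (drop 1 u) else 0)"
proof
  fix u :: "nat list"
  have xl: "\<And>w. length w > l - 1 \<Longrightarrow> x w = 0" using Cl_len[OF x] by simp
  have H: "(\<forall>u. length u > 1 + (l - 1) \<longrightarrow> hmult L q (hsum L 1) x u = 0) \<and>
         (\<forall>u. length u = 1 + (l - 1) \<longrightarrow> hmult L q (hsum L 1) x u =
              (if reduced L u then hsum L 1 (take 1 u) * x (drop 1 u) else 0))"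
    by (rule hmult_top[OF hsum_finite hsum_above xl Cl_red[OF x]])
  show "qproj l (hmult L q (hsum L 1) x) u = (if length u = l \<and> reduced L u then x (drop 1 u) else 0)"
  proof (cases "length u = l")
    case True
    then have "length u = 1 + (l - 1)" using l by simp
    moreover have "reduced L u \<Longrightarrow> hsum L 1 (take 1 u) = 1"
      using True l reduced_take[of L u 1] by (simp add: hsum_def)
    ultimately show ?thesis using H True by (simp add: qproj_def)
  qed (simp add: qproj_def)
qed

lemma Sl_right_eq:
  assumes x: "x \<in> Cl L (l - 1)" and l: "l \<ge> 1"
  shows "qproj l (hmult L q x (hsum L 1)) = (\<lambda>u. if length u = l \<and> reduced L u then x (take (l - 1) u) else 0)"
proof
  fix u :: "nat list"
  have xl: "\<And>w. length w > l - 1 \<Longrightarrow> x w = 0" using Cl_len[OF x] by simp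
  have H: "(\<forall>u. length u > (l - 1) + 1 \<longrightarrow> hmult L q x (hsum L 1) u = 0) \<and>
         (\<forall>u. length u = (l - 1) + 1 \<longrightarrow> hmult L q x (hsum L 1) u =
              (if reduced L u then x (take (l - 1) u) * hsum L 1 (drop (l - 1) u) else 0))"
    by (rule hmult_top[OF Cl_finite[OF x] xl hsum_above hsum_red])
  show "qproj l (hmult L q x (hsum L 1)) u = (if length u = l \<and> reduced L u then x (take (l - 1) u) else 0)"
  proof (cases "length u = l")
    case True
    then have "length u = (l - 1) + 1" using l by simp
    moreover have "reduced L u \<Longrightarrow> hsum L 1 (drop (l - 1) u) = 1"
      using True l reduced_drop[of L u "l - 1"] by (simp add: hsum_def)
    ultimately show ?thesis using H True by (simp add: qproj_def)
  qed (simp add: qproj_def)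
qed

lemma linner_alt:
  assumes "finite S" "{w. x w \<noteq> 0} \<subseteq> S"
  shows "linner x y = (\<Sum>w\<in>S. x w * cnj (y w))"
  unfolding linner_def
  by (rule sum.mono_neutral_left[OF assms(1) assms(2)]) auto

lemma cspan_base: "a \<in> A \<Longrightarrow> a \<in> cspan A"
  unfolding cspan_def
  by (rule CollectI, rule exI[of _ "{a}"], rule exI[of _ "\<lambda>_. 1"]) simp

lemma ind_Cl: "y \<in> RW L k \<Longrightarrow> (\<lambda>w. if w = y then 1 else 0) \<in> Cl L k"
  by (auto simp: Cl_def hecke_def RW_def)

lemma Cperp_Cl: "g \<in> Cperp L q l \<Longrightarrow> g \<in> Cl L l"
  by (simp add: Cperp_def)

lemma orthL:
  assumes g: "g \<in> Cperp L q l" and l: "l \<ge> 1" and y: "y \<in> RW L (l - 1)"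
  shows "(\<Sum>a\<in>extL L y. g (a # y)) = 0"
proof -
  define x where "x = (\<lambda>w. if w = y then (1::complex) else 0)"
  have xC: "x \<in> Cl L (l - 1)" unfolding x_def by (rule ind_Cl[OF y])
  define e where "e = qproj l (hmult L q (hsum L 1) x)"
  have "e \<in> Sl L q l" unfolding Sl_def e_def
    by (rule cspan_base) (use xC in blast)
  then have z: "linner g e = 0" using g by (simp add: Cperp_def)
  have ee: "e = (\<lambda>u. if length u = l \<and> reduced L u then x (drop 1 u) else 0)"
    unfolding e_def by (rule Sl_left_eq[OF xC l])
  define E where "E = (\<lambda>a. a # y) ` extL L y"
  have fE: "finite E" unfolding E_def by (simp add: finite_extL)
  have gC: "g \<in> Cl L l" using g by (simp add: Cperp_def)
  have fS: "finite ({w. g w \<noteq> 0} \<union> E)" using fE Cl_finite[OF gC] by simp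
  have "linner g e = (\<Sum>w\<in>{w. g w \<noteq> 0} \<union> E. g w * cnj (e w))"
    by (rule linner_alt[OF fS]) blast
  also have "\<dots> = (\<Sum>w\<in>E. g w * cnj (e w))"
  proof (rule sum.mono_neutral_right[OF fS])
    show "E \<subseteq> {w. g w \<noteq> 0} \<union> E" by blast
    show "\<forall>w\<in>{w. g w \<noteq> 0} \<union> E - E. g w * cnj (e w) = 0"
    proof
      fix w assume w: "w \<in> {w. g w \<noteq> 0} \<union> E - E"
      have "e w = 0"
      proof (rule ccontr)
        assume "e w \<noteq> 0"
        then have lw: "length w = l" and rw: "reduced L w" and dw: "drop 1 w = y"
          unfolding ee x_def by (auto split: if_splits)
        then obtain a where a: "w = a # y" using l by (cases w) auto
        then have "a \<in> extL L y" using rw by (simp add: reduced_Cons extL_def)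
        then have "w \<in> E" unfolding E_def using a by blast
        then show False using w by blast
      qed
      then show "g w * cnj (e w) = 0" by simp
    qed
  qed
  also have "\<dots> = (\<Sum>w\<in>E. g w)"
  proof (rule sum.cong)
    fix w assume "w \<in> E"
    then obtain a where a: "a \<in> extL L y" "w = a # y" unfolding E_def by blast
    have "reduced L w" using a y by (auto simp: reduced_Cons extL_def RW_def)
    moreover have "length w = l" using a y l by (simp add: RW_def)
    ultimately have "e w = 1" unfolding ee x_def using a by simp
    then show "g w * cnj (e w) = g w" by simp
  qed simp
  also have "\<dots> = (\<Sum>a\<in>extL L y. g (a # y))"
    unfolding E_def by (subst sum.reindex) (auto simp: inj_on_def)
  finally show ?thesis using z by simp
qed

lemma orthR:
  assumes g: "g \<in> Cperp L q l" and l: "l \<ge> 1" and y: "y \<in> RW L (l - 1)"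
  shows "(\<Sum>a\<in>extR L y. g (y @ [a])) = 0"
proof -
  define x where "x = (\<lambda>w. if w = y then (1::complex) else 0)"
  have xC: "x \<in> Cl L (l - 1)" unfolding x_def by (rule ind_Cl[OF y])
  define e where "e = qproj l (hmult L q x (hsum L 1))"
  have "e \<in> Sl L q l" unfolding Sl_def e_def
    by (rule cspan_base) (use xC in blast)
  then have z: "linner g e = 0" using g by (simp add: Cperp_def)
  have ee: "e = (\<lambda>u. if length u = l \<and> reduced L u then x (take (l - 1) u) else 0)"
    unfolding e_def by (rule Sl_right_eq[OF xC l])
  define E where "E = (\<lambda>a. y @ [a]) ` extR L y"
  have fE: "finite E" unfolding E_def by (simp add: finite_extR)
  have gC: "g \<in> Cl L l" using g by (simp add: Cperp_def)
  have fS: "finite ({w. g w \<noteq> 0} \<union> E)" using fE Cl_finite[OF gC] by simp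
  have "linner g e = (\<Sum>w\<in>{w. g w \<noteq> 0} \<union> E. g w * cnj (e w))"
    by (rule linner_alt[OF fS]) blast
  also have "\<dots> = (\<Sum>w\<in>E. g w * cnj (e w))"
  proof (rule sum.mono_neutral_right[OF fS])
    show "E \<subseteq> {w. g w \<noteq> 0} \<union> E" by blast
    show "\<forall>w\<in>{w. g w \<noteq> 0} \<union> E - E. g w * cnj (e w) = 0"
    proof
      fix w assume w: "w \<in> {w. g w \<noteq> 0} \<union> E - E"
      have "e w = 0"
      proof (rule ccontr)
        assume "e w \<noteq> 0"
        then have lw: "length w = l" and rw: "reduced L w" and dw: "take (l - 1) w = y"
          unfolding ee x_def by (auto split: if_splits)
        then have ne: "w \<noteq> []" using l by auto
        then have wb: "w = butlast w @ [last w]" by simp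
        have "butlast w = y" using dw lw by (simp add: butlast_conv_take)
        then have a: "w = y @ [last w]" using wb by simp
        then have "last w \<in> extR L y" using rw reduced_snoc[of L y "last w"] by (simp add: extR_def)
        then have "w \<in> E" unfolding E_def using a by blast
        then show False using w by blast
      qed
      then show "g w * cnj (e w) = 0" by simp
    qed
  qed
  also have "\<dots> = (\<Sum>w\<in>E. g w)"
  proof (rule sum.cong)
    fix w assume "w \<in> E"
    then obtain a where a: "a \<in> extR L y" "w = y @ [a]" unfolding E_def by blast
    have "reduced L w" using a y by (auto simp: reduced_snoc extR_def RW_def)
    moreover have "length w = l" using a y l by (simp add: RW_def)
    moreover have "take (l - 1) w = y" using a y by (simp add: RW_def)
    ultimately have "e w = 1" unfolding ee x_def by simp
    then show "g w * cnj (e w) = g w" by simp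
  qed simp
  also have "\<dots> = (\<Sum>a\<in>extR L y. g (y @ [a]))"
    unfolding E_def by (subst sum.reindex) (auto simp: inj_on_def)
  finally show ?thesis using z by simp
qed

definition Aw :: "nat \<Rightarrow> nat \<Rightarrow> (nat list \<Rightarrow> complex) \<Rightarrow> (nat list \<Rightarrow> complex) \<Rightarrow> nat \<Rightarrow> nat \<Rightarrow> nat \<Rightarrow> complex" where
  "Aw L l g g' m m' N = (\<Sum>u\<in>RW L N. g (take l (drop m u)) * cnj (g' (take l (drop m' u))))"

lemma left_strip1:
  assumes "N \<ge> 1"
  shows "Aw L l g g' (Suc m) (Suc m') (Suc N) = of_nat (L - 1) * Aw L l g g' m m' N"
proof -
  have "Aw L l g g' (Suc m) (Suc m') (Suc N) =
     (\<Sum>u\<in>RW L N. \<Sum>a\<in>extL L u. g (take l (drop m u)) * cnj (g' (take l (drop m' u))))"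
    unfolding Aw_def by (subst RW_Suc_left) simp
  also have "\<dots> = (\<Sum>u\<in>RW L N. of_nat (L - 1) * (g (take l (drop m u)) * cnj (g' (take l (drop m' u)))))"
  proof (rule sum.cong)
    fix u assume u: "u \<in> RW L N"
    then have "card (extL L u) = L - 1" using RW_hd[OF u assms] card_extL by blast
    then show "(\<Sum>a\<in>extL L u. g (take l (drop m u)) * cnj (g' (take l (drop m' u)))) =
      of_nat (L - 1) * (g (take l (drop m u)) * cnj (g' (take l (drop m' u))))" by simp
  qed simp
  also have "\<dots> = of_nat (L - 1) * Aw L l g g' m m' N"
    unfolding Aw_def by (simp add: sum_distrib_left)
  finally show ?thesis .
qed

lemma left_strip:
  assumes "N \<ge> 1"
  shows "Aw L l g g' (m + k) (m' + k) (N + k) = of_nat (L - 1) ^ k * Aw L l g g' m m' N"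
proof (induction k)
  case 0 then show ?case by simp
next
  case (Suc k)
  have "Aw L l g g' (m + Suc k) (m' + Suc k) (N + Suc k) = Aw L l g g' (Suc (m + k)) (Suc (m' + k)) (Suc (N + k))"
    by simp
  also have "\<dots> = of_nat (L - 1) * Aw L l g g' (m + k) (m' + k) (N + k)"
    by (rule left_strip1) (use assms in simp)
  finally show ?case using Suc.IH by simp
qed

lemma right_strip1:
  assumes "N \<ge> 1" "m + l \<le> N" "m' + l \<le> N"
  shows "Aw L l g g' m m' (Suc N) = of_nat (L - 1) * Aw L l g g' m m' N"
proof -
  have "Aw L l g g' m m' (Suc N) =
     (\<Sum>u\<in>RW L N. \<Sum>a\<in>extR L u. g (take l (drop m (u @ [a]))) * cnj (g' (take l (drop m' (u @ [a])))))"
    unfolding Aw_def by (subst RW_Suc_right) simp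
  also have "\<dots> = (\<Sum>u\<in>RW L N. of_nat (L - 1) * (g (take l (drop m u)) * cnj (g' (take l (drop m' u)))))"
  proof (rule sum.cong)
    fix u assume u: "u \<in> RW L N"
    then have c: "card (extR L u) = L - 1" using RW_hd[OF u assms(1)] card_extR by blast
    have lu: "length u = N" using u by (simp add: RW_def)
    have e1: "\<And>a. take l (drop m (u @ [a])) = take l (drop m u)"
      using lu assms by simp
    have e2: "\<And>a. take l (drop m' (u @ [a])) = take l (drop m' u)"
      using lu assms by simp
    show "(\<Sum>a\<in>extR L u. g (take l (drop m (u @ [a]))) * cnj (g' (take l (drop m' (u @ [a]))))) =
      of_nat (L - 1) * (g (take l (drop m u)) * cnj (g' (take l (drop m' u))))"
      by (simp only: e1 e2) (simp add: c)
  qed simp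
  also have "\<dots> = of_nat (L - 1) * Aw L l g g' m m' N"
    unfolding Aw_def by (simp add: sum_distrib_left)
  finally show ?thesis .
qed

lemma right_strip:
  assumes "N \<ge> 1" "m + l \<le> N" "m' + l \<le> N"
  shows "Aw L l g g' m m' (N + k) = of_nat (L - 1) ^ k * Aw L l g g' m m' N"
proof (induction k)
  case 0 then show ?case by simp
next
  case (Suc k)
  have "Aw L l g g' m m' (N + Suc k) = Aw L l g g' m m' (Suc (N + k))" by simp
  also have "\<dots> = of_nat (L - 1) * Aw L l g g' m m' (N + k)"
    by (rule right_strip1) (use assms in simp_all)
  finally show ?case using Suc.IH by simp
qed

lemma reduce_le:
  assumes "m + n = m' + n'" "m \<le> m'" "l \<ge> 1"
  shows "Aw L l g g' m m' (m + n + l) = of_nat (L - 1) ^ (m + n') * Aw L l g g' 0 (m' - m) ((m' - m) + l)"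
proof -
  define k where "k = m' - m"
  have nk: "n = k + n'" "m' = k + m" using assms unfolding k_def by auto
  have "Aw L l g g' m m' (m + n + l) = Aw L l g g' (0 + m) (k + m) ((k + n' + l) + m)"
    using nk by (simp add: algebra_simps)
  also have "\<dots> = of_nat (L - 1) ^ m * Aw L l g g' 0 k (k + n' + l)"
    by (rule left_strip) (use assms in simp)
  also have "Aw L l g g' 0 k (k + n' + l) = Aw L l g g' 0 k ((k + l) + n')"
    by (simp add: algebra_simps)
  also have "\<dots> = of_nat (L - 1) ^ n' * Aw L l g g' 0 k (k + l)"
    by (rule right_strip) (use assms in simp_all)
  finally show ?thesis unfolding k_def by (simp add: power_add)
qed

lemma reduce_gt:
  assumes "m + n = m' + n'" "m' < m" "l \<ge> 1"
  shows "Aw L l g g' m m' (m + n + l) = of_nat (L - 1) ^ (m' + n) * Aw L l g g' (m - m') 0 ((m - m') + l)"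
proof -
  define k where "k = m - m'"
  have nk: "n' = k + n" "m = k + m'" using assms unfolding k_def by auto
  have "Aw L l g g' m m' (m + n + l) = Aw L l g g' (k + m') (0 + m') ((k + n + l) + m')"
    using nk by (simp add: algebra_simps)
  also have "\<dots> = of_nat (L - 1) ^ m' * Aw L l g g' k 0 (k + n + l)"
    by (rule left_strip) (use assms in simp)
  also have "Aw L l g g' k 0 (k + n + l) = Aw L l g g' k 0 ((k + l) + n)"
    by (simp add: algebra_simps)
  also have "\<dots> = of_nat (L - 1) ^ n * Aw L l g g' k 0 (k + l)"
    by (rule right_strip) (use assms in simp_all)
  finally show ?thesis unfolding k_def by (simp add: power_add)
qed

lemma supp_Cl_RW: "g \<in> Cl L l \<Longrightarrow> {w. g w \<noteq> 0} \<subseteq> RW L l"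
  using Cl_red Cl_len by (fastforce simp: RW_def)

lemma base_linner:
  assumes "g \<in> Cl L l"
  shows "Aw L l g g' 0 0 l = linner g g'"
proof -
  have "linner g g' = (\<Sum>w\<in>RW L l. g w * cnj (g' w))"
    by (rule linner_alt[OF finite_RW supp_Cl_RW[OF assms]])
  also have "\<dots> = Aw L l g g' 0 0 l"
    unfolding Aw_def by (rule sum.cong) (auto simp: RW_def)
  finally show ?thesis by simp
qed

lemma linner_gmn:
  assumes "g \<in> Cl L l" "g' \<in> Cl L l"
  shows "linner (gmn L q l g m n) (gmn L q l g' m' n') =
         (if m + n = m' + n' then Aw L l g g' m m' (m + n + l) else 0)"
proof -
  have s: "{w. gmn L q l g m n w \<noteq> 0} \<subseteq> RW L (m + n + l)"
    by (auto simp: gmn_eq[OF assms(1)] RW_def split: if_splits)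
  have "linner (gmn L q l g m n) (gmn L q l g' m' n') =
        (\<Sum>u\<in>RW L (m + n + l). gmn L q l g m n u * cnj (gmn L q l g' m' n' u))"
    by (rule linner_alt[OF finite_RW s])
  also have "\<dots> = (\<Sum>u\<in>RW L (m + n + l). if m + n = m' + n' then
       g (take l (drop m u)) * cnj (g' (take l (drop m' u))) else 0)"
    by (rule sum.cong) (auto simp: gmn_eq[OF assms(1)] gmn_eq[OF assms(2)] RW_def)
  finally show ?thesis by (simp add: Aw_def)
qed

lemma baseL:
  assumes g: "g \<in> Cperp L q l" and l: "l \<ge> 2" and k: "k \<ge> 1"
  shows "Aw L l g g' 0 k (k + l) = 0"
proof -
  have "Aw L l g g' 0 k (k + l) = Aw L l g g' 0 k (Suc (k + l - 1))"
    using l by simp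
  also have "\<dots> = (\<Sum>u\<in>RW L (k + l - 1). \<Sum>a\<in>extL L u.
       g (take l (a # u)) * cnj (g' (take l (drop k (a # u)))))"
    unfolding Aw_def by (subst RW_Suc_left) simp
  also have "\<dots> = (\<Sum>u\<in>RW L (k + l - 1). (\<Sum>a\<in>extL L (take (l - 1) u). g (a # take (l - 1) u)) *
        cnj (g' (take l (drop (k - 1) u))))"
  proof (rule sum.cong)
    fix u assume u: "u \<in> RW L (k + l - 1)"
    have ne: "u \<noteq> []" using u l by (auto simp: RW_def)
    have ex: "extL L (take (l - 1) u) = extL L u" using ne l by (simp add: extL_def)
    have t: "\<And>a. take l (a # u) = a # take (l - 1) u" using l by (cases l) auto
    have d: "\<And>a. drop k (a # u) = drop (k - 1) u" using k by (cases k) auto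
    show "(\<Sum>a\<in>extL L u. g (take l (a # u)) * cnj (g' (take l (drop k (a # u))))) =
      (\<Sum>a\<in>extL L (take (l - 1) u). g (a # take (l - 1) u)) * cnj (g' (take l (drop (k - 1) u)))"
      by (simp only: t d ex sum_distrib_right)
  qed simp
  also have "\<dots> = 0"
  proof (rule sum.neutral, rule ballI)
    fix u assume u: "u \<in> RW L (k + l - 1)"
    have yy: "take (l - 1) u \<in> RW L (l - 1)" using u l
      by (auto simp: RW_def intro: reduced_take)
    have "(\<Sum>a\<in>extL L (take (l - 1) u). g (a # take (l - 1) u)) = 0"
      using orthL[OF g _ yy] l by simp
    then show "(\<Sum>a\<in>extL L (take (l - 1) u). g (a # take (l - 1) u)) * cnj (g' (take l (drop (k - 1) u))) = 0"
      by simp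
  qed
  finally show ?thesis .
qed

lemma baseR:
  assumes g: "g \<in> Cperp L q l" and l: "l \<ge> 2" and k: "k \<ge> 1"
  shows "Aw L l g g' k 0 (k + l) = 0"
proof -
  have "Aw L l g g' k 0 (k + l) = Aw L l g g' k 0 (Suc (k + l - 1))"
    using l by simp
  also have "\<dots> = (\<Sum>u\<in>RW L (k + l - 1). \<Sum>a\<in>extR L u.
       g (take l (drop k (u @ [a]))) * cnj (g' (take l (u @ [a]))))"
    unfolding Aw_def by (subst RW_Suc_right) simp
  also have "\<dots> = (\<Sum>u\<in>RW L (k + l - 1). (\<Sum>a\<in>extR L (drop k u). g (drop k u @ [a])) *
        cnj (g' (take l u)))"
  proof (rule sum.cong)
    fix u assume u: "u \<in> RW L (k + l - 1)"
    have lu: "length u = k + l - 1" using u by (simp add: RW_def)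
    have ne: "drop k u \<noteq> []" using lu l by simp
    have une: "u \<noteq> []" using ne by auto
    have ex: "extR L (drop k u) = extR L u" using ne une lu l by (simp add: extR_def)
    have t: "\<And>a. take l (drop k (u @ [a])) = drop k u @ [a]" using lu l by simp
    have d: "\<And>a. take l (u @ [a]) = take l u" using lu k by simp
    show "(\<Sum>a\<in>extR L u. g (take l (drop k (u @ [a]))) * cnj (g' (take l (u @ [a])))) =
      (\<Sum>a\<in>extR L (drop k u). g (drop k u @ [a])) * cnj (g' (take l u))"
      by (simp only: t d ex sum_distrib_right)
  qed simp
  also have "\<dots> = 0"
  proof (rule sum.neutral, rule ballI)
    fix u assume u: "u \<in> RW L (k + l - 1)"
    have yy: "drop k u \<in> RW L (l - 1)" using u l
      by (auto simp: RW_def intro: reduced_drop)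
    have "(\<Sum>a\<in>extR L (drop k u). g (drop k u @ [a])) = 0"
      using orthR[OF g _ yy] l by simp
    then show "(\<Sum>a\<in>extR L (drop k u). g (drop k u @ [a])) * cnj (g' (take l u)) = 0"
      by simp
  qed
  finally show ?thesis .
qed

lemma beta_sum0:
  assumes g: "g \<in> Cperp L q 1"
  shows "(\<Sum>b\<in>{..<L}. g [b]) = 0"
proof -
  have y: "[] \<in> RW L (1 - 1)" by (simp add: RW_def)
  have "(\<Sum>a\<in>extR L []. g ([] @ [a])) = 0" by (rule orthR[OF g _ y]) simp
  moreover have "extR L [] = {..<L}" by (auto simp: extR_def)
  ultimately show ?thesis by simp
qed

lemma extR_sum:
  assumes u: "u \<in> RW L N" and N: "N \<ge> 1" and s: "(\<Sum>b\<in>{..<L}. f b) = (0::complex)"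
  shows "(\<Sum>b\<in>extR L u. f b) = - f (last u)"
proof -
  have h: "u \<noteq> []" "last u < L" using RW_hd[OF u N] by auto
  then have "extR L u = {..<L} - {last u}" by (auto simp: extR_def)
  then have "(\<Sum>b\<in>extR L u. f b) = (\<Sum>b\<in>{..<L}. f b) - f (last u)"
    using h by (simp add: sum_diff1)
  then show ?thesis using s by simp
qed

lemma drop_last: "length u = Suc k \<Longrightarrow> drop k u = [last u]"
proof -
  assume a: "length u = Suc k"
  then have "u \<noteq> []" by auto
  then have e: "u = butlast u @ [last u]" by simp
  have "length (butlast u) = k" using a by simp
  then show ?thesis by (subst e) simp
qed

lemma betaL:
  assumes b: "\<beta> \<in> Cperp L q 1" and b': "\<beta>' \<in> Cperp L q 1"
  shows "Aw L 1 \<beta> \<beta>' 0 k (k + 1) = (-1) ^ k * linner \<beta> \<beta>'"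
proof (induction k)
  case 0
  then show ?case using base_linner[OF Cperp_Cl[OF b], of \<beta>'] by simp
next
  case (Suc k)
  have s0: "(\<Sum>b\<in>{..<L}. cnj (\<beta>' [b])) = 0" using beta_sum0[OF b'] by (simp flip: cnj_sum)
  have "Aw L 1 \<beta> \<beta>' 0 (Suc k) (Suc k + 1) = Aw L 1 \<beta> \<beta>' 0 (Suc k) (Suc (k + 1))" by simp
  also have "\<dots> = (\<Sum>u\<in>RW L (k + 1). \<Sum>a\<in>extR L u.
       \<beta> (take 1 (u @ [a])) * cnj (\<beta>' (take 1 (drop (Suc k) (u @ [a])))))"
    unfolding Aw_def by (subst RW_Suc_right) simp
  also have "\<dots> = (\<Sum>u\<in>RW L (k + 1). - (\<beta> (take 1 u) * cnj (\<beta>' (take 1 (drop k u)))))"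
  proof (rule sum.cong)
    fix u assume u: "u \<in> RW L (k + 1)"
    have lu: "length u = Suc k" using u by (simp add: RW_def)
    have t: "\<And>a. take 1 (u @ [a]) = take 1 u" using lu by simp
    have d: "\<And>a. drop (Suc k) (u @ [a]) = [a]" using lu by simp
    have e: "(\<Sum>a\<in>extR L u. cnj (\<beta>' [a])) = - cnj (\<beta>' [last u])"
      by (rule extR_sum[OF u _ s0]) simp
    show "(\<Sum>a\<in>extR L u. \<beta> (take 1 (u @ [a])) * cnj (\<beta>' (take 1 (drop (Suc k) (u @ [a]))))) =
       - (\<beta> (take 1 u) * cnj (\<beta>' (take 1 (drop k u))))"
      by (simp only: t d) (simp add: drop_last[OF lu] e flip: sum_distrib_left)
  qed simp
  also have "\<dots> = - Aw L 1 \<beta> \<beta>' 0 k (k + 1)"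
    unfolding Aw_def by (simp add: sum_negf)
  finally show ?case using Suc.IH by simp
qed

lemma betaR:
  assumes b: "\<beta> \<in> Cperp L q 1" and b': "\<beta>' \<in> Cperp L q 1"
  shows "Aw L 1 \<beta> \<beta>' k 0 (k + 1) = (-1) ^ k * linner \<beta> \<beta>'"
proof (induction k)
  case 0
  then show ?case using base_linner[OF Cperp_Cl[OF b], of \<beta>'] by simp
next
  case (Suc k)
  have s0: "(\<Sum>b\<in>{..<L}. \<beta> [b]) = 0" using beta_sum0[OF b] .
  have "Aw L 1 \<beta> \<beta>' (Suc k) 0 (Suc k + 1) = Aw L 1 \<beta> \<beta>' (Suc k) 0 (Suc (k + 1))" by simp
  also have "\<dots> = (\<Sum>u\<in>RW L (k + 1). \<Sum>a\<in>extR L u.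
       \<beta> (take 1 (drop (Suc k) (u @ [a]))) * cnj (\<beta>' (take 1 (u @ [a]))))"
    unfolding Aw_def by (subst RW_Suc_right) simp
  also have "\<dots> = (\<Sum>u\<in>RW L (k + 1). - (\<beta> (take 1 (drop k u)) * cnj (\<beta>' (take 1 u))))"
  proof (rule sum.cong)
    fix u assume u: "u \<in> RW L (k + 1)"
    have lu: "length u = Suc k" using u by (simp add: RW_def)
    have t: "\<And>a. take 1 (u @ [a]) = take 1 u" using lu by simp
    have d: "\<And>a. drop (Suc k) (u @ [a]) = [a]" using lu by simp
    have e: "(\<Sum>a\<in>extR L u. \<beta> [a]) = - \<beta> [last u]"
      by (rule extR_sum[OF u _ s0]) simp
    show "(\<Sum>a\<in>extR L u. \<beta> (take 1 (drop (Suc k) (u @ [a]))) * cnj (\<beta>' (take 1 (u @ [a])))) =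
       - (\<beta> (take 1 (drop k u)) * cnj (\<beta>' (take 1 u)))"
      by (simp only: t d) (simp add: drop_last[OF lu] e flip: sum_distrib_right)
  qed simp
  also have "\<dots> = - Aw L 1 \<beta> \<beta>' k 0 (k + 1)"
    unfolding Aw_def by (simp add: sum_negf)
  finally show ?case using Suc.IH by simp
qed

theorem lemma3p4:
  fixes L l :: nat and q :: real
    and \<beta> \<beta>' \<gamma> \<gamma>' :: "nat list \<Rightarrow> complex"
  assumes "L \<ge> 3"
    and "1 / (real L - 1) \<le> q" and "q \<le> 1"
    and "l \<ge> 2"
    and "\<beta> \<in> Cperp L q 1" and "\<beta>' \<in> Cperp L q 1"
    and "\<gamma> \<in> Cperp L q l" and "\<gamma>' \<in> Cl L l"
  shows "\<forall>m n m' n'.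
      linner (gmn L q 1 \<beta> m n) (gmn L q 1 \<beta>' m' n') =
        (if m + n = m' + n'
         then of_nat (L - 1) ^ (m + n - nat \<bar>int n - int n'\<bar>) * (-1) ^ nat \<bar>int n - int n'\<bar>
         else 0) * linner \<beta> \<beta>'
    \<and> linner (gmn L q l \<gamma> m n) (gmn L q l \<gamma>' m' n') =
        (if m = m' \<and> n = n' then of_nat (L - 1) ^ (m + n) else 0) * linner \<gamma> \<gamma>'"
proof (intro allI conjI)
  fix m n m' n' :: nat
  have b: "\<beta> \<in> Cperp L q 1" and b': "\<beta>' \<in> Cperp L q 1" using assms by auto
  have g: "\<gamma> \<in> Cperp L q l" and g': "\<gamma>' \<in> Cl L l" and l: "l \<ge> 2" using assms by auto
  show "linner (gmn L q 1 \<beta> m n) (gmn L q 1 \<beta>' m' n') =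
        (if m + n = m' + n'
         then of_nat (L - 1) ^ (m + n - nat \<bar>int n - int n'\<bar>) * (-1) ^ nat \<bar>int n - int n'\<bar>
         else 0) * linner \<beta> \<beta>'"
  proof (cases "m + n = m' + n'")
    case False
    then show ?thesis using linner_gmn[OF Cperp_Cl[OF b] Cperp_Cl[OF b'], of q m n m' n'] by simp
  next
    case eq: True
    show ?thesis
    proof (cases "m \<le> m'")
      case True
      have a1: "nat \<bar>int n - int n'\<bar> = m' - m" using eq True by linarith
      have a2: "m + n - (m' - m) = m + n'" using eq True by linarith
      show ?thesis
        using linner_gmn[OF Cperp_Cl[OF b] Cperp_Cl[OF b'], of q m n m' n']
          reduce_le[OF eq True, of 1 L \<beta> \<beta>'] betaL[OF b b', of "m' - m"] eq a1 a2
        by simp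
    next
      case False
      then have F: "m' < m" by simp
      have a1: "nat \<bar>int n - int n'\<bar> = m - m'" using eq F by linarith
      have a2: "m + n - (m - m') = m' + n" using eq F by linarith
      show ?thesis
        using linner_gmn[OF Cperp_Cl[OF b] Cperp_Cl[OF b'], of q m n m' n']
          reduce_gt[OF eq F, of 1 L \<beta> \<beta>'] betaR[OF b b', of "m - m'"] eq a1 a2
        by simp
    qed
  qed
  show "linner (gmn L q l \<gamma> m n) (gmn L q l \<gamma>' m' n') =
        (if m = m' \<and> n = n' then of_nat (L - 1) ^ (m + n) else 0) * linner \<gamma> \<gamma>'"
  proof (cases "m + n = m' + n'")
    case False
    then have "\<not> (m = m' \<and> n = n')" by auto
    then show ?thesis using False by (simp add: linner_gmn[OF Cperp_Cl[OF g] g'])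
  next
    case eq: True
    have l1: "l \<ge> 1" using l by simp
    show ?thesis
    proof (cases "m \<le> m'")
      case True
      have R: "linner (gmn L q l \<gamma> m n) (gmn L q l \<gamma>' m' n') =
          of_nat (L - 1) ^ (m + n') * Aw L l \<gamma> \<gamma>' 0 (m' - m) ((m' - m) + l)"
        using linner_gmn[OF Cperp_Cl[OF g] g', of q m n m' n'] reduce_le[OF eq True l1, of L \<gamma> \<gamma>'] eq
        by simp
      show ?thesis
      proof (cases "m = m'")
        case True
        then have "n = n'" using eq by simp
        then show ?thesis using R True base_linner[OF Cperp_Cl[OF g], of \<gamma>'] by simp
      next
        case False
        then have k: "m' - m \<ge> 1" using \<open>m \<le> m'\<close> by simp
        show ?thesis using R baseL[OF g l k, of \<gamma>'] False by simp
      qed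
    next
      case False
      then have F: "m' < m" by simp
      have R: "linner (gmn L q l \<gamma> m n) (gmn L q l \<gamma>' m' n') =
          of_nat (L - 1) ^ (m' + n) * Aw L l \<gamma> \<gamma>' (m - m') 0 ((m - m') + l)"
        using linner_gmn[OF Cperp_Cl[OF g] g', of q m n m' n'] reduce_gt[OF eq F l1, of L \<gamma> \<gamma>'] eq
        by simp
      have k: "m - m' \<ge> 1" using F by simp
      show ?thesis using R baseR[OF g l k, of \<gamma>'] F by simp
    qed
  qed
qed

end
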